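(* Let $Q$ be a quiver, $\theta\in\mathbb{Z}^{Q_0}$, and $\mathbf{l},\mathbf{u}\in\mathbb{Z}_{\ge0}^{Q_1}$. Then there exist a quiver $Q'$ with no oriented cycles and a weight $\theta'\in\mathbb{Z}^{Q'_0}$ such that the flow polytope $\nabla(Q,\theta,\mathbf{l},\mathbf{u})$ and the quiver polytope $\nabla(Q',\theta')$ are integral-affinely equivalent.
   Context: A quiver $Q$: vertices $Q_0$, arrows $Q_1$, $a$ from $a^-$ to $a^+$. The flow polytope is $\nabla(Q,\theta,\mathbf{l},\mathbf{u})=\{x\in\mathbb{R}^{Q_1}\mid \mathbf{l}\le x\le\mathbf{u},\ \forall v\in Q_0:\ \theta(v)=\sum_{a^+=v}x(a)-\sum_{a^-=v}x(a)\}$ and $\nabla(Q',\theta')=\{x\in\mathbb{R}^{Q'_1}\mid 0\le x,\ \forall v\in Q'_0:\ \theta'(v)=\sum_{a^+=v}x(a)-\sum_{a^-=v}x(a)\}$. Lattice polyhedra $\nabla_i\subset V_i$ with lattices $M_i\subset V_i$ (here $\mathbb{Z}^{Q_1}$ and $\mathbb{Z}^{Q'_1}$) are integral-affinely equivalent if there is an affine linear isomorphism $\varphi:\mathrm{AffSpan}(\nabla_1)\to\mathrm{AffSpan}(\nabla_2)$ mapping $\mathrm{AffSpan}(\nabla_1)\cap M_1$ onto $\mathrm{AffSpan}(\nabla_2)\cap M_2$ and $\nabla_1$ onto $\nabla_2$. *)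

theory Defs
  imports Complex_Main
begin

definition quiver :: "'v set \<Rightarrow> 'a set \<Rightarrow> ('a \<Rightarrow> 'v) \<Rightarrow> ('a \<Rightarrow> 'v) \<Rightarrow> bool" where
  "quiver V A s t \<longleftrightarrow> finite V \<and> finite A \<and> (\<forall>a\<in>A. s a \<in> V \<and> t a \<in> V)"

definition no_oriented_cycles :: "'a set \<Rightarrow> ('a \<Rightarrow> 'v) \<Rightarrow> ('a \<Rightarrow> 'v) \<Rightarrow> bool" where
  "no_oriented_cycles A s t \<longleftrightarrow> acyclic {(s a, t a) | a. a \<in> A}"

text \<open>Points of R^{Q_1} are functions on arrows vanishing outside A.\<close>
definition flow_polytope ::
  "'v set \<Rightarrow> 'a set \<Rightarrow> ('a \<Rightarrow> 'v) \<Rightarrow> ('a \<Rightarrow> 'v) \<Rightarrow> ('v \<Rightarrow> int) \<Rightarrow> ('a \<Rightarrow> int) \<Rightarrow> ('a \<Rightarrow> int)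
     \<Rightarrow> ('a \<Rightarrow> real) set" where
  "flow_polytope V A s t \<theta> l u = {x. (\<forall>a. a \<notin> A \<longrightarrow> x a = 0)
      \<and> (\<forall>a\<in>A. real_of_int (l a) \<le> x a \<and> x a \<le> real_of_int (u a))
      \<and> (\<forall>v\<in>V. real_of_int (\<theta> v) = (\<Sum>a\<in>{a\<in>A. t a = v}. x a) - (\<Sum>a\<in>{a\<in>A. s a = v}. x a))}"

definition quiver_polytope ::
  "'v set \<Rightarrow> 'a set \<Rightarrow> ('a \<Rightarrow> 'v) \<Rightarrow> ('a \<Rightarrow> 'v) \<Rightarrow> ('v \<Rightarrow> int) \<Rightarrow> ('a \<Rightarrow> real) set" where
  "quiver_polytope V A s t \<theta> = {x. (\<forall>a. a \<notin> A \<longrightarrow> x a = 0)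
      \<and> (\<forall>a\<in>A. 0 \<le> x a)
      \<and> (\<forall>v\<in>V. real_of_int (\<theta> v) = (\<Sum>a\<in>{a\<in>A. t a = v}. x a) - (\<Sum>a\<in>{a\<in>A. s a = v}. x a))}"

text \<open>Integer lattice points (combined with the affine span, which vanishes outside the arrows,
  this is the lattice Z^{Q_1}).\<close>
definition int_points :: "('a \<Rightarrow> real) set" where
  "int_points = {x. \<forall>a. x a \<in> \<int>}"

definition aff_span :: "('a \<Rightarrow> real) set \<Rightarrow> ('a \<Rightarrow> real) set" where
  "aff_span S = {y. \<exists>T c. finite T \<and> T \<subseteq> S \<and> sum c T = 1 \<and> y = (\<lambda>a. \<Sum>x\<in>T. c x * x a)}"

definition affine_on :: "('a \<Rightarrow> real) set \<Rightarrow> (('a \<Rightarrow> real) \<Rightarrow> ('b \<Rightarrow> real)) \<Rightarrow> bool" where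
  "affine_on S \<phi> \<longleftrightarrow> (\<forall>T c. finite T \<and> T \<subseteq> S \<and> sum c T = 1 \<longrightarrow>
      \<phi> (\<lambda>a. \<Sum>x\<in>T. c x * x a) = (\<lambda>b. \<Sum>x\<in>T. c x * \<phi> x b))"

definition integral_affinely_equivalent :: "('a \<Rightarrow> real) set \<Rightarrow> ('b \<Rightarrow> real) set \<Rightarrow> bool" where
  "integral_affinely_equivalent P1 P2 \<longleftrightarrow> (\<exists>\<phi>.
      affine_on (aff_span P1) \<phi>
    \<and> bij_betw \<phi> (aff_span P1) (aff_span P2)
    \<and> \<phi> ` (aff_span P1 \<inter> int_points) = aff_span P2 \<inter> int_points
    \<and> \<phi> ` P1 = P2)"

end

theory Submission imports Defs begin

lemma aff_span_Z:
  assumes "S \<subseteq> {x. \<forall>a. a \<notin> A \<longrightarrow> x a = 0}"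
  shows "aff_span S \<subseteq> {x. \<forall>a. a \<notin> A \<longrightarrow> x a = 0}"
proof
  fix y assume "y \<in> aff_span S"
  then obtain T c where T: "finite T" "T \<subseteq> S" "y = (\<lambda>a. \<Sum>x\<in>T. c x * x a)"
    unfolding aff_span_def by blast
  show "y \<in> {x. \<forall>a. a \<notin> A \<longrightarrow> x a = 0}"
  proof (clarsimp)
    fix a assume "a \<notin> A"
    then have "\<forall>x\<in>T. x a = 0" using T assms by blast
    then have "(\<Sum>x\<in>T. c x * x a) = 0" by (intro sum.neutral) simp
    then show "y a = 0" using T by simp
  qed
qed

lemma aff_span_image:
  assumes aff: "\<And>T c. finite T \<Longrightarrow> sum c T = 1 \<Longrightarrow> \<phi> (\<lambda>a. \<Sum>x\<in>T. c x * x a) = (\<lambda>b. \<Sum>x\<in>T. c x * \<phi> x b)"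
    and inj: "inj_on \<phi> S"
  shows "aff_span (\<phi> ` S) = \<phi> ` aff_span S"
proof
  show "aff_span (\<phi> ` S) \<subseteq> \<phi> ` aff_span S"
  proof
    fix y assume "y \<in> aff_span (\<phi> ` S)"
    then obtain T c where T: "finite T" "T \<subseteq> \<phi> ` S" "sum c T = 1" "y = (\<lambda>a. \<Sum>x\<in>T. c x * x a)"
      unfolding aff_span_def by blast
    obtain C where C: "C \<subseteq> S" "finite C" "T = \<phi> ` C" using finite_subset_image[OF T(1) T(2)] by blast
    have injC: "inj_on \<phi> C" using inj C(1) inj_on_subset by blast
    have s1: "sum (c \<circ> \<phi>) C = 1" using T(3) C(3) sum.reindex[OF injC, of c] by simp
    have "y = (\<lambda>b. \<Sum>x\<in>C. (c \<circ> \<phi>) x * \<phi> x b)"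
      unfolding T(4) C(3) by (rule ext) (simp add: sum.reindex[OF injC])
    also have "\<dots> = \<phi> (\<lambda>a. \<Sum>x\<in>C. (c \<circ> \<phi>) x * x a)" using aff[OF C(2) s1] by simp
    finally show "y \<in> \<phi> ` aff_span S" unfolding aff_span_def using C s1 by blast
  qed
next
  show "\<phi> ` aff_span S \<subseteq> aff_span (\<phi> ` S)"
  proof
    fix y assume "y \<in> \<phi> ` aff_span S"
    then obtain T c where T: "finite T" "T \<subseteq> S" "sum c T = 1" "y = \<phi> (\<lambda>a. \<Sum>x\<in>T. c x * x a)"
      unfolding aff_span_def by blast
    have injT: "inj_on \<phi> T" using inj T(2) inj_on_subset by blast
    define d where "d = c \<circ> inv_into T \<phi>"
    have dc: "\<And>x. x \<in> T \<Longrightarrow> d (\<phi> x) = c x" using injT by (simp add: d_def)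
    have s1: "sum d (\<phi> ` T) = 1" using T(3) sum.reindex[OF injT, of d] dc by simp
    have "y = (\<lambda>b. \<Sum>x\<in>T. c x * \<phi> x b)" using aff[OF T(1) T(3)] T(4) by simp
    also have "\<dots> = (\<lambda>b. \<Sum>z\<in>\<phi> ` T. d z * z b)"
      by (rule ext) (simp add: sum.reindex[OF injT] dc)
    finally show "y \<in> aff_span (\<phi> ` S)" unfolding aff_span_def using T s1
      by (intro CollectI exI[of _ "\<phi> ` T"] exI[of _ d]) auto
  qed
qed

lemma iae_generic:
  fixes \<phi> :: "('a\<Rightarrow>real) \<Rightarrow> ('b\<Rightarrow>real)" and \<psi> :: "('b\<Rightarrow>real) \<Rightarrow> ('a\<Rightarrow>real)"
  assumes aff: "\<And>T c. finite T \<Longrightarrow> sum c T = 1 \<Longrightarrow> \<phi> (\<lambda>a. \<Sum>x\<in>T. c x * x a) = (\<lambda>b. \<Sum>x\<in>T. c x * \<phi> x b)"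
  and Z: "P1 \<subseteq> {x. \<forall>a. a \<notin> A \<longrightarrow> x a = 0}"
  and inv: "\<And>x. \<forall>a. a \<notin> A \<longrightarrow> x a = 0 \<Longrightarrow> \<psi> (\<phi> x) = x"
  and img: "\<phi> ` P1 = P2"
  and int\<phi>: "\<And>x. \<forall>a. a \<notin> A \<longrightarrow> x a = 0 \<Longrightarrow> x \<in> int_points \<Longrightarrow> \<phi> x \<in> int_points"
  and int\<psi>: "\<And>y. y \<in> int_points \<Longrightarrow> \<psi> y \<in> int_points"
  shows "integral_affinely_equivalent P1 P2"
proof -
  have AZ: "aff_span P1 \<subseteq> {x. \<forall>a. a \<notin> A \<longrightarrow> x a = 0}" using aff_span_Z[OF Z] .
  have inv2: "\<psi> (\<phi> x) = x" if "x \<in> aff_span P1" for x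
  proof -
    have "\<forall>a. a \<notin> A \<longrightarrow> x a = 0" using AZ that by blast
    then show ?thesis by (rule inv)
  qed
  have injA: "inj_on \<phi> (aff_span P1)"
    by (rule inj_on_inverseI[where g=\<psi>]) (rule inv2)
  have sub: "P1 \<subseteq> aff_span P1"
  proof
    fix x assume "x \<in> P1"
    then show "x \<in> aff_span P1" unfolding aff_span_def
      by (intro CollectI exI[of _ "{x}"] exI[of _ "\<lambda>_. 1"]) auto
  qed
  have injP: "inj_on \<phi> P1" using injA sub inj_on_subset by blast
  have eq: "aff_span P2 = \<phi> ` aff_span P1" using aff_span_image[OF aff injP] img by simp
  have af: "affine_on (aff_span P1) \<phi>" unfolding affine_on_def using aff by blast
  have bij: "bij_betw \<phi> (aff_span P1) (aff_span P2)" using injA eq by (simp add: bij_betw_def)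
  have lat: "\<phi> ` (aff_span P1 \<inter> int_points) = aff_span P2 \<inter> int_points"
  proof
    show "\<phi> ` (aff_span P1 \<inter> int_points) \<subseteq> aff_span P2 \<inter> int_points"
    proof
      fix y assume "y \<in> \<phi> ` (aff_span P1 \<inter> int_points)"
      then obtain x where x: "x \<in> aff_span P1" "x \<in> int_points" "y = \<phi> x" by blast
      have "\<forall>a. a \<notin> A \<longrightarrow> x a = 0" using AZ x(1) by blast
      then have "y \<in> int_points" using int\<phi> x by blast
      moreover have "y \<in> aff_span P2" using eq x by blast
      ultimately show "y \<in> aff_span P2 \<inter> int_points" by blast
    qed
    show "aff_span P2 \<inter> int_points \<subseteq> \<phi> ` (aff_span P1 \<inter> int_points)"
    proof
      fix y assume y: "y \<in> aff_span P2 \<inter> int_points"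
      then obtain x where x: "x \<in> aff_span P1" "y = \<phi> x" using eq by blast
      have "x = \<psi> y" using inv2[OF x(1)] x(2) by simp
      then have "x \<in> int_points" using int\<psi> y by blast
      then show "y \<in> \<phi> ` (aff_span P1 \<inter> int_points)" using x by blast
    qed
  qed
  show ?thesis unfolding integral_affinely_equivalent_def using af bij lat img by blast
qed

lemma acyc_oe: "r \<subseteq> {(x::nat, y). odd x \<and> even y} \<Longrightarrow> acyclic r"
proof -
  assume r: "r \<subseteq> {(x::nat, y). odd x \<and> even y}"
  have "(x, y) \<in> r\<^sup>+ \<Longrightarrow> odd x \<and> even y" for x y
    by (induction rule: trancl_induct) (use r in auto)
  then show ?thesis unfolding acyclic_def by blast
qed


theorem proposition2p2:
  fixes V :: "'v set" and A :: "'a set" and s t :: "'a \<Rightarrow> 'v"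
    and \<theta> :: "'v \<Rightarrow> int" and l u :: "'a \<Rightarrow> int"
  assumes "quiver V A s t"
    and "\<forall>a\<in>A. 0 \<le> l a" and "\<forall>a\<in>A. 0 \<le> u a"
  shows "\<exists>(V' :: nat set) (A' :: nat set) (s' :: nat \<Rightarrow> nat) (t' :: nat \<Rightarrow> nat) (\<theta>' :: nat \<Rightarrow> int).
           quiver V' A' s' t' \<and> no_oriented_cycles A' s' t'
         \<and> integral_affinely_equivalent (flow_polytope V A s t \<theta> l u) (quiver_polytope V' A' s' t' \<theta>')"
proof -
  from assms(1) have fV: "finite V" and fA: "finite A" and st: "\<And>a. a\<in>A \<Longrightarrow> s a \<in> V \<and> t a \<in> V"
    unfolding quiver_def by auto
  obtain gA :: "'a \<Rightarrow> nat" where gA: "inj_on gA A" using finite_imp_inj_to_nat_seg[OF fA] by blast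
  obtain gV :: "'v \<Rightarrow> nat" where gV: "inj_on gV V" using finite_imp_inj_to_nat_seg[OF fV] by blast
  define pA where "pA = inv_into A gA"
  define pV where "pV = inv_into V gV"
  have pA[simp]: "\<And>a. a\<in>A \<Longrightarrow> pA (gA a) = a" using gA by (simp add: pA_def)
  have pV[simp]: "\<And>v. v\<in>V \<Longrightarrow> pV (gV v) = v" using gV by (simp add: pV_def)
  have gAe[simp]: "\<And>a b. a\<in>A \<Longrightarrow> b\<in>A \<Longrightarrow> gA a = gA b \<longleftrightarrow> a = b" using gA by (meson inj_on_eq_iff)
  have gVe[simp]: "\<And>a b. a\<in>V \<Longrightarrow> b\<in>V \<Longrightarrow> gV a = gV b \<longleftrightarrow> a = b" using gV by (meson inj_on_eq_iff)
  define V' where "V' = (\<lambda>v. 2*gV v) ` V \<union> (\<lambda>a. 2*gA a+1) ` A"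
  define A' where "A' = (\<lambda>a. 2*gA a) ` A \<union> (\<lambda>a. 2*gA a+1) ` A"
  define s' where "s' = (\<lambda>n::nat. 2*(n div 2)+1)"
  define t' where "t' = (\<lambda>n::nat. if even n then 2*gV (t (pA (n div 2))) else 2*gV (s (pA (n div 2))))"
  define \<theta>' where "\<theta>' = (\<lambda>n::nat. if odd n then l (pA (n div 2)) - u (pA (n div 2))
      else \<theta> (pV (n div 2)) - (\<Sum>a\<in>{a\<in>A. t a = pV (n div 2)}. l a) + (\<Sum>a\<in>{a\<in>A. s a = pV (n div 2)}. u a))"
  define \<phi> where "\<phi> = (\<lambda>(x::'a\<Rightarrow>real) (n::nat). if n\<in>A' then (if even n then x (pA (n div 2)) - l (pA (n div 2))
      else u (pA (n div 2)) - x (pA (n div 2))) else 0)"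
  define \<psi> where "\<psi> = (\<lambda>(y::nat\<Rightarrow>real) a. if a\<in>A then y (2*gA a) + l a else 0)"
  have t'e[simp]: "\<And>a. a\<in>A \<Longrightarrow> t' (2*gA a) = 2*gV (t a)" by (simp add: t'_def)
  have t'o[simp]: "\<And>a. a\<in>A \<Longrightarrow> t' (2*gA a+1) = 2*gV (s a)" by (simp add: t'_def)
  have s'e[simp]: "\<And>a. s' (2*gA a) = 2*gA a+1" by (simp add: s'_def)
  have s'o[simp]: "\<And>a. s' (2*gA a+1) = 2*gA a+1" by (simp add: s'_def)
  have A'e[simp]: "\<And>a. a\<in>A \<Longrightarrow> 2*gA a \<in> A'" by (simp add: A'_def)
  have A'o[simp]: "\<And>a. a\<in>A \<Longrightarrow> 2*gA a+1 \<in> A'" by (simp add: A'_def)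
  have \<phi>e[simp]: "\<And>(x::'a\<Rightarrow>real) a. a\<in>A \<Longrightarrow> \<phi> x (2*gA a) = x a - l a" by (simp add: \<phi>_def)
  have \<phi>o[simp]: "\<And>(x::'a\<Rightarrow>real) a. a\<in>A \<Longrightarrow> \<phi> x (2*gA a+1) = u a - x a"
    using A'o by (simp add: \<phi>_def)
  have t'o'[simp]: "\<And>a. a\<in>A \<Longrightarrow> t' (Suc (2*gA a)) = 2*gV (s a)" by (simp add: t'_def)
  have s'o'[simp]: "\<And>a. s' (Suc (2*gA a)) = Suc (2*gA a)" by (simp add: s'_def)
  have A'o'[simp]: "\<And>a. a\<in>A \<Longrightarrow> Suc (2*gA a) \<in> A'" by (simp add: A'_def)
  have \<phi>o'[simp]: "\<And>(x::'a\<Rightarrow>real) a. a\<in>A \<Longrightarrow> \<phi> x (Suc (2*gA a)) = u a - x a" using \<phi>o by simp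
  have \<phi>n: "\<And>x n. n \<notin> A' \<Longrightarrow> \<phi> x n = 0" by (simp add: \<phi>_def)
  have \<theta>'o: "\<And>a. a\<in>A \<Longrightarrow> \<theta>' (2*gA a+1) = l a - u a" by (simp add: \<theta>'_def)
  have \<theta>'e: "\<And>v. v\<in>V \<Longrightarrow> \<theta>' (2*gV v) = \<theta> v - (\<Sum>a\<in>{a\<in>A. t a = v}. l a) + (\<Sum>a\<in>{a\<in>A. s a = v}. u a)"
    by (simp add: \<theta>'_def)
  have A'cases: "\<And>n P. n \<in> A' \<Longrightarrow> (\<And>a. a\<in>A \<Longrightarrow> n = 2*gA a \<Longrightarrow> P) \<Longrightarrow> (\<And>a. a\<in>A \<Longrightarrow> n = 2*gA a+1 \<Longrightarrow> P) \<Longrightarrow> P"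
    unfolding A'_def by blast
  have V'cases: "\<And>n P. n \<in> V' \<Longrightarrow> (\<And>v. v\<in>V \<Longrightarrow> n = 2*gV v \<Longrightarrow> P) \<Longrightarrow> (\<And>a. a\<in>A \<Longrightarrow> n = 2*gA a+1 \<Longrightarrow> P) \<Longrightarrow> P"
    unfolding V'_def by blast
  have tset: "\<And>v. v\<in>V \<Longrightarrow> {m\<in>A'. t' m = 2*gV v} = (\<lambda>a. 2*gA a)`{a\<in>A. t a = v} \<union> (\<lambda>a. 2*gA a+1)`{a\<in>A. s a = v}"
  proof -
    fix v assume v: "v\<in>V"
    show "{m\<in>A'. t' m = 2*gV v} = (\<lambda>a. 2*gA a)`{a\<in>A. t a = v} \<union> (\<lambda>a. 2*gA a+1)`{a\<in>A. s a = v}"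
    proof (rule set_eqI, rule iffI)
      fix m assume "m \<in> {m\<in>A'. t' m = 2*gV v}"
      then have m: "m \<in> A'" "t' m = 2*gV v" by auto
      show "m \<in> (\<lambda>a. 2*gA a)`{a\<in>A. t a = v} \<union> (\<lambda>a. 2*gA a+1)`{a\<in>A. s a = v}"
        by (rule A'cases[OF m(1)]) (use m v st in auto)
    qed (use v st in auto)
  qed
  have oe1: "\<And>(i::nat) j. 2*i \<noteq> Suc (2*j)" by presburger
  have oe2: "\<And>(i::nat) j. Suc (2*j) \<noteq> 2*i" by presburger
  have sset: "\<And>v. v\<in>V \<Longrightarrow> {m\<in>A'. s' m = 2*gV v} = {}"
    using oe2 by (auto simp: s'_def)
  have tsetA: "\<And>a. a\<in>A \<Longrightarrow> {m\<in>A'. t' m = 2*gA a+1} = {}"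
    using oe1 by (auto simp: t'_def)
  have ssetA: "\<And>a. a\<in>A \<Longrightarrow> {m\<in>A'. s' m = 2*gA a+1} = {2*gA a, 2*gA a+1}"
  proof -
    fix a assume a: "a\<in>A"
    show "{m\<in>A'. s' m = 2*gA a+1} = {2*gA a, 2*gA a+1}"
    proof (rule set_eqI, rule iffI)
      fix m assume "m \<in> {m\<in>A'. s' m = 2*gA a+1}"
      then have m: "m \<in> A'" "s' m = 2*gA a+1" by auto
      show "m \<in> {2*gA a, 2*gA a+1}"
        by (rule A'cases[OF m(1)]) (use m a in auto)
    qed (use a in auto)
  qed
  have injE: "inj_on (\<lambda>a. 2*gA a) B" if "B \<subseteq> A" for B
    using inj_on_subset[OF gA that] by (auto simp: inj_on_def)
  have injO: "inj_on (\<lambda>a. 2*gA a+1) B" if "B \<subseteq> A" for B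
    using inj_on_subset[OF gA that] by (auto simp: inj_on_def)
  have balV: "(\<Sum>m\<in>{m\<in>A'. t' m = 2*gV v}. y m) - (\<Sum>m\<in>{m\<in>A'. s' m = 2*gV v}. y m)
      = (\<Sum>a\<in>{a\<in>A. t a = v}. y (2*gA a)) + (\<Sum>a\<in>{a\<in>A. s a = v}. y (2*gA a+1))" if v: "v\<in>V" for v and y :: "nat \<Rightarrow> real"
  proof -
    have d: "(\<lambda>a. 2*gA a)`{a\<in>A. t a = v} \<inter> (\<lambda>a. 2*gA a+1)`{a\<in>A. s a = v} = {}"
      using oe1 by auto
    have e1: "(\<Sum>m\<in>(\<lambda>a. 2*gA a)`{a\<in>A. t a = v}. y m) = (\<Sum>a\<in>{a\<in>A. t a = v}. y (2*gA a))"
      by (subst sum.reindex[OF injE]) auto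
    have e2: "(\<Sum>m\<in>(\<lambda>a. 2*gA a+1)`{a\<in>A. s a = v}. y m) = (\<Sum>a\<in>{a\<in>A. s a = v}. y (2*gA a+1))"
      by (subst sum.reindex[OF injO]) auto
    have "(\<Sum>m\<in>{m\<in>A'. t' m = 2*gV v}. y m) = (\<Sum>m\<in>(\<lambda>a. 2*gA a)`{a\<in>A. t a = v}. y m) + (\<Sum>m\<in>(\<lambda>a. 2*gA a+1)`{a\<in>A. s a = v}. y m)"
      unfolding tset[OF v] by (rule sum.union_disjoint) (use fA d in auto)
    then show ?thesis unfolding sset[OF v] e1 e2 by simp
  qed
  have balA: "(\<Sum>m\<in>{m\<in>A'. t' m = 2*gA a+1}. y m) - (\<Sum>m\<in>{m\<in>A'. s' m = 2*gA a+1}. y m)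
      = - (y (2*gA a) + y (2*gA a+1))" if a: "a\<in>A" for a and y :: "nat \<Rightarrow> real"
    unfolding tsetA[OF a] ssetA[OF a] by simp
  have quiv: "quiver V' A' s' t'"
    unfolding quiver_def
  proof (intro conjI ballI)
    show "finite V'" "finite A'" using fV fA by (auto simp: V'_def A'_def)
  next
    fix m assume m: "m \<in> A'"
    show "s' m \<in> V'" by (rule A'cases[OF m]) (use st in \<open>auto simp: V'_def\<close>)
    show "t' m \<in> V'" by (rule A'cases[OF m]) (use st in \<open>auto simp: V'_def\<close>)
  qed
  have acyc: "no_oriented_cycles A' s' t'"
    unfolding no_oriented_cycles_def
    by (rule acyc_oe) (auto simp: s'_def t'_def)
  let ?P1 = "flow_polytope V A s t \<theta> l u"
  let ?P2 = "quiver_polytope V' A' s' t' \<theta>'"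
  have aff: "\<phi> (\<lambda>a. \<Sum>x\<in>T. c x * x a) = (\<lambda>b. \<Sum>x\<in>T. c x * \<phi> x b)" if "finite T" "sum c T = 1" for T c
  proof (rule ext)
    fix n
    have k: "(\<Sum>x\<in>T. c x * K) = K" for K :: real using that(2) by (simp add: sum_distrib_right[symmetric])
    show "\<phi> (\<lambda>a. \<Sum>x\<in>T. c x * x a) n = (\<Sum>x\<in>T. c x * \<phi> x n)"
    proof (cases "n \<in> A'")
      case False then show ?thesis by (simp add: \<phi>_def)
    next
      case True then show ?thesis
        by (cases "even n") (simp_all add: \<phi>_def right_diff_distrib sum_subtractf k)
    qed
  qed
  have inv: "\<psi> (\<phi> x) = x" if "\<forall>a. a \<notin> A \<longrightarrow> x a = 0" for x
    using that by (intro ext) (simp add: \<psi>_def)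
  have int\<phi>: "\<phi> x \<in> int_points" if "x \<in> int_points" for x
    using that unfolding int_points_def \<phi>_def by (auto intro: Ints_diff Ints_of_int)
  have int\<psi>: "\<psi> y \<in> int_points" if "y \<in> int_points" for y
    using that unfolding int_points_def \<psi>_def by (auto intro: Ints_add Ints_of_int)
  have Z: "?P1 \<subseteq> {x. \<forall>a. a \<notin> A \<longrightarrow> x a = 0}" unfolding flow_polytope_def by blast
  have img: "\<phi> ` ?P1 = ?P2"
  proof
    show "\<phi> ` ?P1 \<subseteq> ?P2"
    proof
      fix y assume "y \<in> \<phi> ` ?P1"
      then obtain x where x: "x \<in> ?P1" and y: "y = \<phi> x" by blast
      from x have xb: "\<And>a. a\<in>A \<Longrightarrow> l a \<le> x a \<and> x a \<le> u a"
         and xv: "\<And>v. v\<in>V \<Longrightarrow> real_of_int (\<theta> v) = (\<Sum>a\<in>{a\<in>A. t a = v}. x a) - (\<Sum>a\<in>{a\<in>A. s a = v}. x a)"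
        unfolding flow_polytope_def by auto
      show "y \<in> ?P2" unfolding quiver_polytope_def
      proof (intro CollectI conjI allI ballI impI)
        fix n assume "n \<notin> A'" then show "y n = 0" using \<phi>n y by simp
      next
        fix n assume n: "n \<in> A'"
        show "0 \<le> y n"
        proof (rule A'cases[OF n])
          fix a assume a: "a\<in>A" "n = 2*gA a"
          then show ?thesis using xb[OF a(1)] y \<phi>e[OF a(1)] by simp
        next
          fix a assume a: "a\<in>A" "n = 2*gA a+1"
          then show ?thesis using xb[OF a(1)] y \<phi>o[OF a(1)] by simp
        qed
      next
        fix w assume w: "w \<in> V'"
        show "real_of_int (\<theta>' w) = (\<Sum>a\<in>{a\<in>A'. t' a = w}. y a) - (\<Sum>a\<in>{a\<in>A'. s' a = w}. y a)"
        proof (rule V'cases[OF w])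
          fix v assume v: "v\<in>V" and wv: "w = 2*gV v"
          have "(\<Sum>a\<in>{a\<in>A'. t' a = w}. y a) - (\<Sum>a\<in>{a\<in>A'. s' a = w}. y a)
              = (\<Sum>a\<in>{a\<in>A. t a = v}. y (2*gA a)) + (\<Sum>a\<in>{a\<in>A. s a = v}. y (2*gA a+1))"
            unfolding wv by (rule balV[OF v])
          also have "\<dots> = (\<Sum>a\<in>{a\<in>A. t a = v}. x a - l a) + (\<Sum>a\<in>{a\<in>A. s a = v}. u a - x a)"
            using y by (intro arg_cong2[where f="(+)"] sum.cong) auto
          also have "\<dots> = real_of_int (\<theta>' w)"
            unfolding wv \<theta>'e[OF v] using xv[OF v] by (simp add: sum_subtractf of_int_sum)
          finally show ?thesis by simp
        next
          fix a assume a: "a\<in>A" and wa: "w = 2*gA a+1"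
          show ?thesis unfolding wa balA[OF a] \<theta>'o[OF a] using a y by simp
        qed
      qed
    qed
  next
    show "?P2 \<subseteq> \<phi> ` ?P1"
    proof
      fix y assume yP: "y \<in> ?P2"
      from yP have y0: "\<And>n. n \<notin> A' \<Longrightarrow> y n = 0" and yb: "\<And>n. n\<in>A' \<Longrightarrow> 0 \<le> y n"
        and yv: "\<And>w. w\<in>V' \<Longrightarrow> real_of_int (\<theta>' w) = (\<Sum>a\<in>{a\<in>A'. t' a = w}. y a) - (\<Sum>a\<in>{a\<in>A'. s' a = w}. y a)"
        unfolding quiver_polytope_def by auto
      have Vo: "\<And>a. a\<in>A \<Longrightarrow> 2*gA a+1 \<in> V'" and Ve: "\<And>v. v\<in>V \<Longrightarrow> 2*gV v \<in> V'"
        by (auto simp: V'_def)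
      have yo: "y (2*gA a+1) = u a - l a - y (2*gA a)" if a: "a\<in>A" for a
        using yv[OF Vo[OF a]] unfolding balA[OF a] \<theta>'o[OF a] by simp
      define x where "x = \<psi> y"
      have xa: "\<And>a. a\<in>A \<Longrightarrow> x a = y (2*gA a) + l a" by (simp add: x_def \<psi>_def)
      have yx: "y = \<phi> x"
      proof (rule ext)
        fix n show "y n = \<phi> x n"
        proof (cases "n \<in> A'")
          case False then show ?thesis using y0 \<phi>n by simp
        next
          case True show ?thesis
          proof (rule A'cases[OF True])
            fix a assume a: "a\<in>A" "n = 2*gA a"
            then show ?thesis using xa[OF a(1)] \<phi>e[OF a(1)] by simp
          next
            fix a assume a: "a\<in>A" "n = 2*gA a+1"
            then show ?thesis using xa[OF a(1)] yo[OF a(1)] \<phi>o[OF a(1)] by simp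
          qed
        qed
      qed
      have "x \<in> ?P1" unfolding flow_polytope_def
      proof (intro CollectI conjI allI ballI impI)
        fix a assume "a \<notin> A" then show "x a = 0" by (simp add: x_def \<psi>_def)
      next
        fix a assume a: "a\<in>A"
        show "real_of_int (l a) \<le> x a" using xa[OF a] yb[OF A'e[OF a]] by simp
        show "x a \<le> real_of_int (u a)" using xa[OF a] yb[OF A'o[OF a]] yo[OF a] by simp
      next
        fix v assume v: "v\<in>V"
        have "real_of_int (\<theta>' (2*gV v)) = (\<Sum>a\<in>{a\<in>A. t a = v}. y (2*gA a)) + (\<Sum>a\<in>{a\<in>A. s a = v}. y (2*gA a+1))"
          using yv[OF Ve[OF v]] balV[OF v, of y] by simp
        also have "\<dots> = (\<Sum>a\<in>{a\<in>A. t a = v}. x a - l a) + (\<Sum>a\<in>{a\<in>A. s a = v}. u a - x a)"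
          by (intro arg_cong2[where f="(+)"] sum.cong) (auto simp: xa yo[simplified])
        finally show "real_of_int (\<theta> v) = (\<Sum>a\<in>{a\<in>A. t a = v}. x a) - (\<Sum>a\<in>{a\<in>A. s a = v}. x a)"
          unfolding \<theta>'e[OF v] by (simp add: sum_subtractf of_int_sum)
      qed
      then show "y \<in> \<phi> ` ?P1" using yx by blast
    qed
  qed
  have "integral_affinely_equivalent ?P1 ?P2"
    by (rule iae_generic[OF aff Z inv img]) (use int\<phi> int\<psi> in blast)+
  then show ?thesis using quiv acyc by blast
qed

end
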